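(* Let $\mathcal{H}$ be a real Hilbert space, let $\Gamma\subseteq\mathbb{R}_{++}$ be nonempty, let $\alpha\in(0,1)$ and let $(T_\gamma)_{\gamma\in\Gamma}$ be a family of $\alpha$-averaged nonexpansive operators $\mathcal{H}\to\mathcal{H}$ with $\operatorname{Fix}T_\gamma\neq\emptyset$ for all $\gamma\in\Gamma$. Let $(\mathcal{Q}_{\delta\leftarrow\gamma})_{\gamma,\delta\in\Gamma}$ be fixed-point relocators for $(T_\gamma)_{\gamma\in\Gamma}$ with Lipschitz constants $(\mathcal{L}_{\delta\leftarrow\gamma})_{\gamma,\delta\in\Gamma}$ in $[1,+\infty)$. Suppose that: (1) for each bounded subset $S\subseteq\bigcup_{\gamma\in\Gamma}(\operatorname{Fix}T_\gamma\times\{\gamma\})$ there exists $L>0$ with $\|\mathcal{Q}_{\delta\leftarrow\gamma}x-\mathcal{Q}_{\gamma\leftarrow\gamma}x\|\le L|\delta-\gamma|$ for all $\delta\in\Gamma$ and all $(x,\gamma)\in S$; (2) the map $\mathcal{H}\times\Gamma\to\mathcal{H}$, $(x,\gamma)\mapsto T_\gamma x$, is continuous; (3) $(T_\gamma)_{\gamma\in\Gamma}$ is uniformly boundedly linearly regular; (4) $(\gamma_n)_{n\in\mathbb{N}}\subseteq\Gamma$ converges $R$-linearly to some $\gamma^*\in\Gamma$, and $\sum_{n\in\mathbb{N}}(\mathcal{L}_{\gamma_{n+1}\leftarrow\gamma_n}-1)<+\infty$. Given $x_0\in\mathcal{H}$, define $x_{n+1}:=\mathcal{Q}_{\gamma_{n+1}\leftarrow\gamma_n}T_{\gamma_n}x_n$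 for all $n\in\mathbb{N}$. Then: (i) $(\operatorname{dist}(x_n,\operatorname{Fix}T_{\gamma_n}))_{n\in\mathbb{N}}$ converges $R$-linearly to zero; (ii) $(x_n)_{n\in\mathbb{N}}$ and $(T_{\gamma_n}x_n)_{n\in\mathbb{N}}$ converge $R$-linearly to the same point in $\operatorname{Fix}T_{\gamma^*}$.
   Context: An operator $T:\mathcal{H}\to\mathcal{H}$ is $\alpha$-averaged nonexpansive ($\alpha\in(0,1)$) if $\|Tx-Ty\|^2+\frac{1-\alpha}{\alpha}\|(x-Tx)-(y-Ty)\|^2\le\|x-y\|^2$ for all $x,y$. $\operatorname{Fix}T=\{x: Tx=x\}$, and $\operatorname{dist}(x,C)=\inf_{y\in C}\|x-y\|$. Fixed-point relocators: given a nonempty $\Gamma\subseteq\mathbb{R}_{++}$ and operators $(T_\gamma)_{\gamma\in\Gamma}$ on $\mathcal{H}$, a family of operators $(\mathcal{Q}_{\delta\leftarrow\gamma})_{\delta,\gamma\in\Gamma}$ on $\mathcal{H}$ is called fixed-point relocators for $(T_\gamma)$ with Lipschitz constants $(\mathcal{L}_{\delta\leftarrow\gamma})$ in $[1,\infty)$ if: (a) for all $\gamma,\delta\in\Gamma$, the restriction of $\mathcal{Q}_{\delta\leftarrow\gamma}$ to $\operatorname{Fix}T_\gamma$ is a bijection from $\operatorname{Fix}T_\gamma$ onto $\operatorname{Fix}T_\delta$; (b) for all $\gamma\in\Gamma$ and $x\in\operatorname{Fix}T_\gamma$, the map $\Gamma\to\mathcal{H}$, $\delta\mapsto\mathcal{Q}_{\delta\leftarrow\gamma}x$,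 is continuous; (c) for all $\gamma,\delta,\epsilon\in\Gamma$ and $x\in\operatorname{Fix}T_\gamma$, $\mathcal{Q}_{\epsilon\leftarrow\delta}\mathcal{Q}_{\delta\leftarrow\gamma}x=\mathcal{Q}_{\epsilon\leftarrow\gamma}x$; (d) each $\mathcal{Q}_{\delta\leftarrow\gamma}$ is $\mathcal{L}_{\delta\leftarrow\gamma}$-Lipschitz continuous. Uniform bounded linear regularity: $(T_\gamma)_{\gamma\in\Gamma}$ is uniformly boundedly linearly regular if for every nonempty bounded $S\subseteq\mathcal{H}$ there is $\kappa>0$ with $\operatorname{dist}(x,\operatorname{Fix}T_\gamma)\le\kappa\|x-T_\gamma x\|$ for all $x\in S$ and all $\gamma\in\Gamma$. A sequence $(a_n)$ converges $R$-linearly to $a$ if there exist $C\ge 0$ and $r\in(0,1)$ with $\|a_n-a\|\le Cr^n$ for all $n$. *)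

theory Defs
  imports "HOL-Analysis.Analysis"
begin

definition Fix :: "('a \<Rightarrow> 'a) \<Rightarrow> 'a set" where
  "Fix T = {x. T x = x}"

definition averaged_nonexp :: "real \<Rightarrow> ('a::real_inner \<Rightarrow> 'a) \<Rightarrow> bool" where
  "averaged_nonexp \<alpha> T \<longleftrightarrow>
     (\<forall>x y. (norm (T x - T y))\<^sup>2 + ((1 - \<alpha>) / \<alpha>) * (norm ((x - T x) - (y - T y)))\<^sup>2
            \<le> (norm (x - y))\<^sup>2)"

text \<open>Q d g stands for the relocator from gamma = g to delta = d; Lc d g is its Lipschitz constant.\<close>
definition fixed_point_relocators ::
  "real set \<Rightarrow> (real \<Rightarrow> 'a::real_normed_vector \<Rightarrow> 'a) \<Rightarrow> (real \<Rightarrow> real \<Rightarrow> 'a \<Rightarrow> 'a)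
   \<Rightarrow> (real \<Rightarrow> real \<Rightarrow> real) \<Rightarrow> bool" where
  "fixed_point_relocators \<Gamma> T Q Lc \<longleftrightarrow>
     (\<forall>g\<in>\<Gamma>. \<forall>d\<in>\<Gamma>. bij_betw (Q d g) (Fix (T g)) (Fix (T d))) \<and>
     (\<forall>g\<in>\<Gamma>. \<forall>x\<in>Fix (T g). continuous_on \<Gamma> (\<lambda>d. Q d g x)) \<and>
     (\<forall>g\<in>\<Gamma>. \<forall>d\<in>\<Gamma>. \<forall>e\<in>\<Gamma>. \<forall>x\<in>Fix (T g). Q e d (Q d g x) = Q e g x) \<and>
     (\<forall>g\<in>\<Gamma>. \<forall>d\<in>\<Gamma>. 1 \<le> Lc d g \<and> (Lc d g)-lipschitz_on UNIV (Q d g))"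

definition unif_bdd_lin_regular :: "real set \<Rightarrow> (real \<Rightarrow> 'a::real_normed_vector \<Rightarrow> 'a) \<Rightarrow> bool" where
  "unif_bdd_lin_regular \<Gamma> T \<longleftrightarrow>
     (\<forall>S. S \<noteq> {} \<and> bounded S \<longrightarrow>
        (\<exists>\<kappa>>0. \<forall>x\<in>S. \<forall>g\<in>\<Gamma>. infdist x (Fix (T g)) \<le> \<kappa> * norm (x - T g x)))"

definition R_linear_conv :: "(nat \<Rightarrow> 'a::real_normed_vector) \<Rightarrow> 'a \<Rightarrow> bool" where
  "R_linear_conv a l \<longleftrightarrow> (\<exists>C\<ge>0. \<exists>r. 0 < r \<and> r < 1 \<and> (\<forall>n. norm (a n - l) \<le> C * r ^ n))"

end

theory Submission
  imports Defs
begin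
lemma geom_limit:
  fixes x :: "nat \<Rightarrow> 'a::{real_normed_vector,complete_space}"
  assumes K: "\<And>n. norm (x (Suc n) - x n) \<le> K * r ^ n" and r: "0 < r" "r < 1" and K0: "0 \<le> K"
  shows "\<exists>p. \<forall>n. norm (x n - p) \<le> K / (1 - r) * r ^ n"
proof -
  define c where "c = K / (1 - r)"
  have gsum: "(\<Sum>i<j. r ^ i) \<le> 1 / (1 - r)" for j
    using sum_le_suminf[OF summable_geometric[of r], of "{..<j}"] r suminf_geometric[of r] by simp
  have tail: "norm (x (n + j) - x n) \<le> c * r ^ n" for n j
  proof -
    have "norm (x (n + j) - x n) \<le> K * r ^ n * (\<Sum>i<j. r ^ i)"
    proof (induction j)
      case 0 show ?case by simp
    next
      case (Suc j)
      have "norm (x (n + Suc j) - x n) \<le> norm (x (Suc (n + j)) - x (n + j)) + norm (x (n + j) - x n)"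
        using norm_triangle_ineq[of "x (Suc (n + j)) - x (n + j)" "x (n + j) - x n"] by simp
      also have "\<dots> \<le> K * r ^ (n + j) + K * r ^ n * (\<Sum>i<j. r ^ i)" using K[of "n+j"] Suc.IH by linarith
      also have "\<dots> = K * r ^ n * (\<Sum>i<Suc j. r ^ i)" by (simp add: power_add algebra_simps)
      finally show ?case .
    qed
    also have "\<dots> \<le> K * r ^ n * (1 / (1 - r))" using gsum[of j] K0 r by (intro mult_left_mono) auto
    finally show ?thesis by (simp add: c_def)
  qed
  have lim0: "(\<lambda>n. c * r ^ n) \<longlonglongrightarrow> 0" using r by (intro tendsto_mult_right_zero LIMSEQ_power_zero) auto
  have "Cauchy x"
  proof (rule CauchyI)
    fix e :: real assume e: "0 < e"
    from order_tendstoD(2)[OF lim0 e] obtain M where M: "\<And>n. n \<ge> M \<Longrightarrow> c * r ^ n < e"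
      by (auto simp: eventually_sequentially)
    show "\<exists>M. \<forall>m\<ge>M. \<forall>n\<ge>M. norm (x m - x n) < e"
    proof (intro exI allI impI)
      fix m n assume mn: "M \<le> m" "M \<le> n"
      show "norm (x m - x n) < e"
      proof (cases "m \<le> n")
        case True
        then obtain j where "n = m + j" using le_Suc_ex by blast
        then have "norm (x m - x n) \<le> c * r ^ m" using tail[of m j] by (simp add: norm_minus_commute)
        then show ?thesis using M[OF mn(1)] by linarith
      next
        case False
        then obtain j where "m = n + j" using le_Suc_ex[of n m] by auto
        then have "norm (x m - x n) \<le> c * r ^ n" using tail[of n j] by simp
        then show ?thesis using M[OF mn(2)] by linarith
      qed
    qed
  qed
  then obtain p where p: "x \<longlonglongrightarrow> p" using Cauchy_convergent_iff convergent_def by blast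
  show ?thesis
  proof (intro exI allI)
    fix n
    have "(\<lambda>m. norm (x m - x n)) \<longlonglongrightarrow> norm (p - x n)" by (intro tendsto_norm tendsto_diff p tendsto_const)
    moreover have "\<exists>N. \<forall>m\<ge>N. norm (x m - x n) \<le> c * r ^ n"
    proof (intro exI allI impI)
      fix m assume "n \<le> m" then obtain j where "m = n + j" using le_Suc_ex by blast
      then show "norm (x m - x n) \<le> c * r ^ n" using tail[of n j] by simp
    qed
    ultimately have "norm (p - x n) \<le> c * r ^ n" by (rule LIMSEQ_le_const2)
    then show "norm (x n - p) \<le> K / (1 - r) * r ^ n" by (simp add: c_def norm_minus_commute)
  qed
qed

lemma le_infdist_helper:
  assumes "A \<noteq> {}" "\<And>z. z \<in> A \<Longrightarrow> a \<le> dist y z"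
  shows "a \<le> infdist y A"
  unfolding infdist_notempty[OF assms(1)] by (rule cINF_greatest) (use assms in auto)

lemma R_lin_tendsto:
  assumes "R_linear_conv a l"
  shows "a \<longlonglongrightarrow> l"
proof -
  obtain C r where C: "C \<ge> 0" "0 < r" "r < 1" "\<forall>n. norm (a n - l) \<le> C * r ^ n"
    using assms unfolding R_linear_conv_def by blast
  have "(\<lambda>n. C * r ^ n) \<longlonglongrightarrow> 0"
    using C by (intro tendsto_mult_right_zero LIMSEQ_power_zero) auto
  then have "(\<lambda>n. a n - l) \<longlonglongrightarrow> 0"
    using C(4) by (intro Lim_null_comparison[of "\<lambda>n. a n - l" "\<lambda>n. C * r ^ n"]) (auto intro: always_eventually)
  then show ?thesis by (simp add: LIM_zero_iff)
qed

theorem theorem3p6: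
  fixes \<Gamma> :: "real set" and \<alpha> :: real
    and T :: "real \<Rightarrow> 'a::{real_inner,complete_space} \<Rightarrow> 'a"
    and Q :: "real \<Rightarrow> real \<Rightarrow> 'a \<Rightarrow> 'a" and Lc :: "real \<Rightarrow> real \<Rightarrow> real"
    and \<gamma> :: "nat \<Rightarrow> real" and \<gamma>s :: real and x :: "nat \<Rightarrow> 'a"
  assumes \<Gamma>_pos: "\<Gamma> \<subseteq> {0<..}" and \<Gamma>_ne: "\<Gamma> \<noteq> {}"
    and \<alpha>: "0 < \<alpha>" "\<alpha> < 1"
    and avg: "\<forall>g\<in>\<Gamma>. averaged_nonexp \<alpha> (T g)"
    and fix_ne: "\<forall>g\<in>\<Gamma>. Fix (T g) \<noteq> {}"
    and reloc: "fixed_point_relocators \<Gamma> T Q Lc"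
    and h1: "\<forall>S. bounded S \<and> S \<subseteq> (\<Union>g\<in>\<Gamma>. Fix (T g) \<times> {g}) \<longrightarrow>
               (\<exists>L>0. \<forall>d\<in>\<Gamma>. \<forall>(y, g)\<in>S. norm (Q d g y - Q g g y) \<le> L * \<bar>d - g\<bar>)"
    and h2: "continuous_on (UNIV \<times> \<Gamma>) (\<lambda>(y, g). T g y)"
    and h3: "unif_bdd_lin_regular \<Gamma> T"
    and h4: "\<forall>n. \<gamma> n \<in> \<Gamma>" "\<gamma>s \<in> \<Gamma>" "R_linear_conv \<gamma> \<gamma>s"
      "summable (\<lambda>n. Lc (\<gamma> (Suc n)) (\<gamma> n) - 1)"
    and iter: "\<forall>n. x (Suc n) = Q (\<gamma> (Suc n)) (\<gamma> n) (T (\<gamma> n) (x n))"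
  shows "R_linear_conv (\<lambda>n. infdist (x n) (Fix (T (\<gamma> n)))) 0 \<and>
         (\<exists>p\<in>Fix (T \<gamma>s). R_linear_conv x p \<and> R_linear_conv (\<lambda>n. T (\<gamma> n) (x n)) p)"
proof -
  define ea where "ea = (1 - \<alpha>) / \<alpha>"
  have ea_pos: "ea > 0" using \<alpha> by (simp add: ea_def)
  have avgD: "(norm (T g a - T g b))\<^sup>2 + ea * (norm ((a - T g a) - (b - T g b)))\<^sup>2 \<le> (norm (a - b))\<^sup>2"
    if "g \<in> \<Gamma>" for g a b
    using avg that unfolding averaged_nonexp_def ea_def by blast
  have nonexp: "norm (T g a - T g b) \<le> norm (a - b)" if "g \<in> \<Gamma>" for g a b
  proof -
    have "0 \<le> ea * (norm ((a - T g a) - (b - T g b)))\<^sup>2" using ea_pos by simp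
    then have "(norm (T g a - T g b))\<^sup>2 \<le> (norm (a - b))\<^sup>2"
      using avgD[OF that, of a b] by linarith
    then show ?thesis by (rule power2_le_imp_le) simp
  qed
  have Tfix: "T g z = z" if "z \<in> Fix (T g)" for g z using that by (simp add: Fix_def)
  have fixineq: "(norm (T g a - z))\<^sup>2 + ea * (norm (a - T g a))\<^sup>2 \<le> (norm (a - z))\<^sup>2"
    if "g \<in> \<Gamma>" "z \<in> Fix (T g)" for g a z
    using avgD[OF that(1), of a z] Tfix[OF that(2)] by simp
  have Qmap: "Q d g w \<in> Fix (T d)" if "g \<in> \<Gamma>" "d \<in> \<Gamma>" "w \<in> Fix (T g)" for g d w
    using reloc that unfolding fixed_point_relocators_def by (meson bij_betwE)
  have Qlip: "norm (Q d g a - Q d g b) \<le> Lc d g * norm (a - b)" if "g \<in> \<Gamma>" "d \<in> \<Gamma>" for g d a b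
  proof -
    have "(Lc d g)-lipschitz_on UNIV (Q d g)"
      using reloc that unfolding fixed_point_relocators_def by blast
    then show ?thesis using lipschitz_onD[of "Lc d g" UNIV "Q d g" a b] by (simp add: dist_norm)
  qed
  have Lc1: "1 \<le> Lc d g" if "g \<in> \<Gamma>" "d \<in> \<Gamma>" for g d
    using reloc that unfolding fixed_point_relocators_def by blast
  have Qcomp: "Q e d (Q d g w) = Q e g w"
    if "g \<in> \<Gamma>" "d \<in> \<Gamma>" "e \<in> \<Gamma>" "w \<in> Fix (T g)" for g d e w
    using reloc that unfolding fixed_point_relocators_def by blast
  have Qid: "Q g g w = w" if "g \<in> \<Gamma>" "w \<in> Fix (T g)" for g w
  proof -
    have inj: "inj_on (Q g g) (Fix (T g))"
      using reloc that unfolding fixed_point_relocators_def by (meson bij_betw_imp_inj_on)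
    have "Q g g (Q g g w) = Q g g w" using Qcomp[OF that(1) that(1) that(1) that(2)] .
    then show ?thesis using inj_onD[OF inj] Qmap[OF that(1) that(1) that(2)] that(2) by blast
  qed
  define Ln where "Ln n = Lc (\<gamma> (Suc n)) (\<gamma> n)" for n
  define y where "y n = T (\<gamma> n) (x n)" for n
  define F where "F n = Fix (T (\<gamma> n))" for n
  define d where "d n = infdist (x n) (F n)" for n
  have g_in: "\<gamma> n \<in> \<Gamma>" for n using h4(1) by blast
  have F_ne: "F n \<noteq> {}" for n using fix_ne g_in by (simp add: F_def)
  have Ln1: "1 \<le> Ln n" for n using Lc1 g_in by (simp add: Ln_def)
  have xs: "x (Suc n) = Q (\<gamma> (Suc n)) (\<gamma> n) (y n)" for n using iter by (simp add: y_def)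
  obtain C0 r0 where C0: "C0 \<ge> 0" "0 < r0" "r0 < 1" "\<And>n. \<bar>\<gamma> n - \<gamma>s\<bar> \<le> C0 * r0 ^ n"
    using h4(3) unfolding R_linear_conv_def real_norm_def by blast
  have gb: "\<bar>\<gamma> n - \<gamma>s\<bar> \<le> C0" for n
  proof -
    have "r0 ^ n \<le> 1" using C0 by (simp add: power_le_one)
    then have "C0 * r0 ^ n \<le> C0" using C0(1) by (simp add: mult_left_le)
    then show ?thesis using C0(4)[of n] by linarith
  qed
  define S where "S = (\<Sum>n. Ln n - 1)"
  define P where "P = exp S"
  have sumL: "summable (\<lambda>n. Ln n - 1)" using h4(4) by (simp add: Ln_def)
  have prodb: "(\<Prod>k<n. Ln k) \<le> P" for n
  proof -
    have "(\<Prod>k<n. Ln k) \<le> (\<Prod>k<n. exp (Ln k - 1))"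
    proof (rule prod_mono)
      fix i show "0 \<le> Ln i \<and> Ln i \<le> exp (Ln i - 1)"
        using Ln1[of i] exp_ge_add_one_self[of "Ln i - 1"] by simp
    qed
    also have "\<dots> = exp (\<Sum>k<n. Ln k - 1)" by (simp add: exp_sum)
    also have "\<dots> \<le> P"
      unfolding P_def S_def using sum_le_suminf[OF sumL, of "{..<n}"] Ln1 by simp
    finally show ?thesis .
  qed
  have prod1: "1 \<le> (\<Prod>k<n. Ln k)" for n using Ln1 by (intro prod_ge_1) auto
  have LnP: "Ln n \<le> P" for n
  proof -
    have "Ln n \<le> (\<Prod>k<n. Ln k) * Ln n" using prod1[of n] Ln1[of n] by (simp add: mult_le_cancel_right1)
    also have "\<dots> = (\<Prod>k<Suc n. Ln k)" by simp
    finally show ?thesis using prodb[of "Suc n"] by linarith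
  qed
  have P1: "1 \<le> P" using prodb[of 0] by simp
  obtain p0 where p0: "p0 \<in> Fix (T (\<gamma> 0))" using fix_ne g_in by blast
  define z where "z n = Q (\<gamma> n) (\<gamma> 0) p0" for n
  have zF: "z n \<in> F n" for n using Qmap g_in p0 by (simp add: z_def F_def)
  have zs: "z (Suc n) = Q (\<gamma> (Suc n)) (\<gamma> n) (z n)" for n
    using Qcomp[OF g_in g_in g_in p0] by (simp add: z_def)
  have z0: "z 0 = p0" using Qid[OF g_in p0] by (simp add: z_def)
  have xz: "norm (x n - z n) \<le> (\<Prod>k<n. Ln k) * norm (x 0 - p0)" for n
  proof (induction n)
    case 0 show ?case by (simp add: z0)
  next
    case (Suc n)
    have "norm (x (Suc n) - z (Suc n)) \<le> Ln n * norm (y n - z n)"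
      unfolding xs zs Ln_def by (rule Qlip[OF g_in g_in])
    also have "\<dots> \<le> Ln n * ((\<Prod>k<n. Ln k) * norm (x 0 - p0))"
    proof (rule mult_left_mono)
      have "norm (y n - z n) \<le> norm (x n - z n)"
        using nonexp[OF g_in, of n "x n" "z n"] Tfix[of "z n" "\<gamma> n"] zF[of n] by (simp add: y_def F_def)
      then show "norm (y n - z n) \<le> (\<Prod>k<n. Ln k) * norm (x 0 - p0)" using Suc.IH by linarith
      show "0 \<le> Ln n" using Ln1[of n] by linarith
    qed
    finally show ?case by (simp add: mult_ac)
  qed
  have "bounded {(p0, \<gamma> 0)} \<and> {(p0, \<gamma> 0)} \<subseteq> (\<Union>g\<in>\<Gamma>. Fix (T g) \<times> {g})"
    using p0 g_in by auto
  then obtain L1 where L1: "L1 > 0"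
    "\<forall>\<delta>\<in>\<Gamma>. \<forall>(a, g)\<in>{(p0, \<gamma> 0)}. norm (Q \<delta> g a - Q g g a) \<le> L1 * \<bar>\<delta> - g\<bar>"
    using h1 by blast
  have zp: "norm (z n - p0) \<le> L1 * (C0 + \<bar>\<gamma>s - \<gamma> 0\<bar>)" for n
  proof -
    have "norm (z n - p0) \<le> L1 * \<bar>\<gamma> n - \<gamma> 0\<bar>"
      using L1(2) g_in[of n] Qid[OF g_in p0] by (simp add: z_def)
    also have "\<dots> \<le> L1 * (C0 + \<bar>\<gamma>s - \<gamma> 0\<bar>)"
      using gb[of n] L1(1) by (intro mult_left_mono) auto
    finally show ?thesis .
  qed
  define B where "B = P * norm (x 0 - p0) + L1 * (C0 + \<bar>\<gamma>s - \<gamma> 0\<bar>) + norm p0"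
  have xB: "norm (x n) \<le> B" for n
  proof -
    have "x n = (x n - z n) + (z n - p0) + p0" by simp
    then have "norm (x n) \<le> norm (x n - z n) + norm (z n - p0) + norm p0"
      by (metis norm_triangle_ineq add_right_mono order_trans)
    moreover have "norm (x n - z n) \<le> P * norm (x 0 - p0)"
      using xz[of n] prodb[of n] by (meson mult_right_mono norm_ge_zero order_trans)
    ultimately show ?thesis using zp[of n] unfolding B_def by linarith
  qed
  have bx: "bounded (range x)" unfolding bounded_iff
  proof (intro exI ballI)
    fix t assume "t \<in> range x"
    then obtain n where "t = x n" by blast
    then show "norm t \<le> B" using xB[of n] by simp
  qed
  obtain \<kappa> where \<kappa>: "\<kappa> > 0" "\<forall>a\<in>range x. \<forall>g\<in>\<Gamma>. infdist a (Fix (T g)) \<le> \<kappa> * norm (a - T g a)"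
    using h3 bx unfolding unif_bdd_lin_regular_def by blast
  have dk: "d n \<le> \<kappa> * norm (x n - y n)" for n using \<kappa>(2) g_in by (simp add: d_def F_def y_def)
  have d_nn: "0 \<le> d n" for n by (simp add: d_def infdist_nonneg)
  define A where "A n = infdist (y n) (F n)" for n
  have A_nn: "0 \<le> A n" for n by (simp add: A_def infdist_nonneg)
  have key: "(A n)\<^sup>2 + ea * (norm (x n - y n))\<^sup>2 \<le> (d n)\<^sup>2" for n
  proof -
    have "sqrt ((A n)\<^sup>2 + ea * (norm (x n - y n))\<^sup>2) \<le> d n"
      unfolding d_def
    proof (rule le_infdist_helper[OF F_ne])
      fix w assume w: "w \<in> F n"
      have "A n \<le> norm (y n - w)" unfolding A_def using infdist_le[OF w, of "y n"] by (simp add: dist_norm)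
      then have "(A n)\<^sup>2 \<le> (norm (y n - w))\<^sup>2" using A_nn[of n] by (simp add: power_mono)
      moreover have "(norm (y n - w))\<^sup>2 + ea * (norm (x n - y n))\<^sup>2 \<le> (norm (x n - w))\<^sup>2"
        using fixineq[of "\<gamma> n" w "x n"] w g_in[of n] by (simp add: F_def y_def)
      ultimately have "(A n)\<^sup>2 + ea * (norm (x n - y n))\<^sup>2 \<le> (dist (x n) w)\<^sup>2" by (simp add: dist_norm)
      then show "sqrt ((A n)\<^sup>2 + ea * (norm (x n - y n))\<^sup>2) \<le> dist (x n) w"
        by (rule real_le_lsqrt[rotated]) simp
    qed
    then show ?thesis by (rule sqrt_le_D)
  qed
  define \<epsilon> where "\<epsilon> = ea / \<kappa>\<^sup>2"
  have eps_pos: "\<epsilon> > 0" using ea_pos \<kappa>(1) by (simp add: \<epsilon>_def)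
  have epsd: "\<epsilon> * (d n)\<^sup>2 \<le> ea * (norm (x n - y n))\<^sup>2" for n
  proof -
    have "(d n)\<^sup>2 \<le> (\<kappa> * norm (x n - y n))\<^sup>2" using dk[of n] d_nn[of n] by (simp add: power_mono)
    then have "\<epsilon> * (d n)\<^sup>2 \<le> \<epsilon> * (\<kappa> * norm (x n - y n))\<^sup>2" using eps_pos by (simp add: mult_left_mono)
    also have "\<dots> = ea * (norm (x n - y n))\<^sup>2" using \<kappa>(1) by (simp add: \<epsilon>_def power_mult_distrib)
    finally show ?thesis .
  qed
  define q where "q = max (1 - \<epsilon>) (1/4)"
  have q: "0 < q" "q < 1" using eps_pos by (auto simp: q_def)
  define sq where "sq = sqrt q"
  have sq: "0 < sq" "sq < 1" using q by (auto simp: sq_def)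
  have An: "A n \<le> sq * d n" for n
  proof -
    have "(A n)\<^sup>2 \<le> (1 - \<epsilon>) * (d n)\<^sup>2" using key[of n] epsd[of n] by (simp add: algebra_simps)
    also have "\<dots> \<le> q * (d n)\<^sup>2" by (intro mult_right_mono) (auto simp: q_def)
    also have "\<dots> = (sq * d n)\<^sup>2" using q by (simp add: sq_def power_mult_distrib)
    finally show ?thesis by (rule power2_le_imp_le) (use sq d_nn in simp)
  qed
  define M where "M = sqrt (1 / ea)"
  have M_nn: "0 \<le> M" using ea_pos by (simp add: M_def)
  have xy: "norm (x n - y n) \<le> M * d n" for n
  proof -
    have "ea * (norm (x n - y n))\<^sup>2 \<le> (d n)\<^sup>2" using key[of n] by (smt (verit) zero_le_power2)
    then have "(norm (x n - y n))\<^sup>2 \<le> (d n)\<^sup>2 / ea" using ea_pos by (simp add: field_simps)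
    also have "\<dots> = (M * d n)\<^sup>2" using ea_pos by (simp add: M_def power_mult_distrib)
    finally show ?thesis by (rule power2_le_imp_le) (use M_nn d_nn in simp)
  qed
  have drec: "d (Suc n) \<le> Ln n * A n" for n
  proof -
    have Lpos: "0 < Ln n" using Ln1[of n] by linarith
    have "d (Suc n) / Ln n \<le> A n" unfolding A_def
    proof (rule le_infdist_helper[OF F_ne])
      fix w assume w: "w \<in> F n"
      have "Q (\<gamma> (Suc n)) (\<gamma> n) w \<in> F (Suc n)" using Qmap g_in w by (simp add: F_def)
      then have "d (Suc n) \<le> norm (x (Suc n) - Q (\<gamma> (Suc n)) (\<gamma> n) w)"
        unfolding d_def using infdist_le by (metis dist_norm)
      also have "\<dots> \<le> Ln n * norm (y n - w)" unfolding xs Ln_def by (rule Qlip[OF g_in g_in])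
      finally show "d (Suc n) / Ln n \<le> dist (y n) w" using Lpos by (simp add: pos_divide_le_eq dist_norm mult.commute)
    qed
    then show ?thesis using Lpos by (simp add: pos_divide_le_eq mult.commute)
  qed
  have dbound: "d n \<le> (\<Prod>k<n. Ln k) * sq ^ n * d 0" for n
  proof (induction n)
    case 0 show ?case by simp
  next
    case (Suc n)
    have "d (Suc n) \<le> Ln n * A n" by (rule drec)
    also have "\<dots> \<le> Ln n * (sq * ((\<Prod>k<n. Ln k) * sq ^ n * d 0))"
      using An[of n] Suc.IH Ln1[of n] sq(1)
      by (intro mult_left_mono) (auto intro: order_trans mult_left_mono)
    also have "\<dots> = (\<Prod>k<Suc n. Ln k) * sq ^ Suc n * d 0" by (simp add: mult_ac)
    finally show ?case .
  qed
  have dP: "d n \<le> (P * d 0) * sq ^ n" for n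
  proof -
    have "(\<Prod>k<n. Ln k) * sq ^ n * d 0 \<le> P * sq ^ n * d 0"
      using prodb[of n] sq d_nn[of 0] by (intro mult_right_mono) auto
    then show ?thesis using dbound[of n] by (simp add: mult_ac)
  qed
  have part1: "R_linear_conv (\<lambda>n. infdist (x n) (Fix (T (\<gamma> n)))) 0"
    unfolding R_linear_conv_def
    using dP d_nn sq P1 by (intro exI[of _ "P * d 0"] conjI exI[of _ sq]) (auto simp: d_def F_def)
  have "\<exists>v. v \<in> F n \<and> norm (x n - v) \<le> d n + sq ^ n" for n
  proof (rule ccontr)
    assume "\<not> ?thesis"
    then have "\<And>v. v \<in> F n \<Longrightarrow> d n + sq ^ n \<le> dist (x n) v" by (auto simp: dist_norm)
    then have "d n + sq ^ n \<le> infdist (x n) (F n)" by (rule le_infdist_helper[OF F_ne])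
    then show False using zero_less_power[OF sq(1), of n] by (simp add: d_def)
  qed
  then obtain w where w: "\<And>n. w n \<in> F n" "\<And>n. norm (x n - w n) \<le> d n + sq ^ n" by metis
  define D where "D = P * d 0 + 1"
  have D_nn: "0 \<le> D" using P1 d_nn[of 0] by (simp add: D_def)
  have xw: "norm (x n - w n) \<le> D * sq ^ n" for n
    using w(2)[of n] dP[of n] by (simp add: D_def algebra_simps)
  have sq1: "sq ^ n \<le> 1" for n using sq by (simp add: power_le_one)
  have xwD: "norm (x n - w n) \<le> D" for n
    using xw[of n] sq1[of n] D_nn by (meson mult_left_le order_trans)
  have wB: "norm (w n) \<le> B + D" for n
  proof -
    have "norm (w n) \<le> norm (x n) + norm (x n - w n)"
      by (metis norm_minus_commute norm_triangle_sub add.commute)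
    then show ?thesis using xB[of n] xwD[of n] by linarith
  qed
  have bw: "bounded (range w)" unfolding bounded_iff
  proof (intro exI ballI)
    fix t assume "t \<in> range w"
    then obtain n where "t = w n" by blast
    then show "norm t \<le> B + D" using wB[of n] by simp
  qed
  have bg: "bounded (range \<gamma>)" unfolding bounded_iff
  proof (intro exI ballI)
    fix t assume "t \<in> range \<gamma>"
    then obtain n where "t = \<gamma> n" by blast
    then show "norm t \<le> \<bar>\<gamma>s\<bar> + C0" using gb[of n] by (simp add: real_norm_def)
  qed
  have bS: "bounded (range (\<lambda>n. (w n, \<gamma> n)))"
    by (rule bounded_subset[OF bounded_Times[OF bw bg]]) auto
  have Ssub: "range (\<lambda>n. (w n, \<gamma> n)) \<subseteq> (\<Union>g\<in>\<Gamma>. Fix (T g) \<times> {g})"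
    using w(1) g_in by (auto simp: F_def)
  obtain L2 where L2: "L2 > 0"
    "\<forall>\<delta>\<in>\<Gamma>. \<forall>(a, g)\<in>range (\<lambda>n. (w n, \<gamma> n)). norm (Q \<delta> g a - Q g g a) \<le> L2 * \<bar>\<delta> - g\<bar>"
    using h1[rule_format, OF conjI[OF bS Ssub]] by blast
  have Qw: "norm (Q (\<gamma> (Suc n)) (\<gamma> n) (w n) - w n) \<le> (2 * L2 * C0) * r0 ^ n" for n
  proof -
    have mem: "(w n, \<gamma> n) \<in> range (\<lambda>n. (w n, \<gamma> n))" by blast
    have wid: "Q (\<gamma> n) (\<gamma> n) (w n) = w n" using Qid[OF g_in[of n]] w(1)[of n] by (simp add: F_def)
    have "norm (Q (\<gamma> (Suc n)) (\<gamma> n) (w n) - Q (\<gamma> n) (\<gamma> n) (w n)) \<le> L2 * \<bar>\<gamma> (Suc n) - \<gamma> n\<bar>"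
      using bspec[OF bspec[OF L2(2) g_in[of "Suc n"]] mem] by simp
    then have "norm (Q (\<gamma> (Suc n)) (\<gamma> n) (w n) - w n) \<le> L2 * \<bar>\<gamma> (Suc n) - \<gamma> n\<bar>"
      by (simp only: wid)
    also have "\<dots> \<le> L2 * (2 * C0 * r0 ^ n)"
    proof (rule mult_left_mono)
      have "r0 ^ Suc n \<le> r0 ^ n" using C0 by (simp add: power_decreasing)
      then have "C0 * r0 ^ Suc n \<le> C0 * r0 ^ n" using C0(1) by (simp add: mult_left_mono)
      then show "\<bar>\<gamma> (Suc n) - \<gamma> n\<bar> \<le> 2 * C0 * r0 ^ n"
        using C0(4)[of n] C0(4)[of "Suc n"] by linarith
      show "0 \<le> L2" using L2(1) by simp
    qed
    finally show ?thesis by (simp add: mult_ac)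
  qed
  define \<rho> where "\<rho> = max sq r0"
  have \<rho>: "0 < \<rho>" "\<rho> < 1" using sq C0 by (auto simp: \<rho>_def)
  have sq\<rho>: "sq ^ n \<le> \<rho> ^ n" for n using sq by (intro power_mono) (auto simp: \<rho>_def)
  have r0\<rho>: "r0 ^ n \<le> \<rho> ^ n" for n using C0 by (intro power_mono) (auto simp: \<rho>_def)
  define K where "K = P * D + 2 * L2 * C0 + D"
  have step: "norm (x (Suc n) - x n) \<le> K * \<rho> ^ n" for n
  proof -
    let ?Q = "Q (\<gamma> (Suc n)) (\<gamma> n)"
    have eq: "x (Suc n) - x n = (?Q (y n) - ?Q (w n)) + (?Q (w n) - w n) + (w n - x n)"
      by (simp add: xs)
    have n1: "norm (?Q (y n) - ?Q (w n)) \<le> P * D * \<rho> ^ n"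
    proof -
      have "norm (?Q (y n) - ?Q (w n)) \<le> Ln n * norm (y n - w n)"
        unfolding Ln_def by (rule Qlip[OF g_in g_in])
      also have "\<dots> \<le> P * (D * \<rho> ^ n)"
      proof (rule mult_mono)
        have "norm (y n - w n) \<le> norm (x n - w n)"
          using nonexp[OF g_in, of n "x n" "w n"] Tfix[of "w n" "\<gamma> n"] w(1)[of n]
          by (simp add: y_def F_def)
        also have "\<dots> \<le> D * sq ^ n" by (rule xw)
        also have "\<dots> \<le> D * \<rho> ^ n" using sq\<rho>[of n] D_nn by (rule mult_left_mono)
        finally show "norm (y n - w n) \<le> D * \<rho> ^ n" .
      qed (use LnP P1 in auto)
      finally show ?thesis by (simp add: mult_ac)
    qed
    have n2: "norm (?Q (w n) - w n) \<le> (2 * L2 * C0) * \<rho> ^ n"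
    proof -
      have "0 \<le> 2 * L2 * C0" using L2(1) C0(1) by simp
      from mult_left_mono[OF r0\<rho>[of n] this] show ?thesis using Qw[of n] by linarith
    qed
    have n3: "norm (w n - x n) \<le> D * \<rho> ^ n"
      using xw[of n] mult_left_mono[OF sq\<rho>[of n] D_nn] norm_minus_commute[of "w n" "x n"] by linarith
    have "norm (x (Suc n) - x n) \<le> norm (?Q (y n) - ?Q (w n)) + norm (?Q (w n) - w n) + norm (w n - x n)"
      unfolding eq by (rule order_trans[OF norm_triangle_ineq add_right_mono[OF norm_triangle_ineq]])
    also have "\<dots> \<le> K * \<rho> ^ n" using n1 n2 n3 by (simp add: K_def algebra_simps)
    finally show ?thesis .
  qed
  have K_nn: "0 \<le> K" using P1 D_nn L2(1) C0(1) by (simp add: K_def)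
  obtain p where p: "\<And>n. norm (x n - p) \<le> K / (1 - \<rho>) * \<rho> ^ n"
    using geom_limit[of x K \<rho>] step \<rho> K_nn by blast
  have Rx: "R_linear_conv x p" unfolding R_linear_conv_def
    using p \<rho> K_nn by (intro exI[of _ "K / (1 - \<rho>)"] conjI exI[of _ \<rho>]) auto
  have yp: "norm (y n - p) \<le> (M * (P * d 0) + K / (1 - \<rho>)) * \<rho> ^ n" for n
  proof -
    have "norm (y n - p) \<le> norm (y n - x n) + norm (x n - p)"
      using norm_triangle_ineq[of "y n - x n" "x n - p"] by simp
    moreover have "norm (y n - x n) \<le> M * (P * d 0) * \<rho> ^ n"
    proof -
      have "norm (y n - x n) \<le> M * d n" using xy[of n] norm_minus_commute[of "y n" "x n"] by linarith
      also have "\<dots> \<le> M * ((P * d 0) * \<rho> ^ n)"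
      proof (rule mult_left_mono[OF _ M_nn])
        have "0 \<le> P * d 0" using P1 d_nn[of 0] by simp
        from mult_left_mono[OF sq\<rho>[of n] this] show "d n \<le> P * d 0 * \<rho> ^ n"
          using dP[of n] by linarith
      qed
      finally show ?thesis by (simp add: mult_ac)
    qed
    ultimately show ?thesis using p[of n] by (simp add: algebra_simps)
  qed
  have Ry: "R_linear_conv y p" unfolding R_linear_conv_def
    using yp \<rho> K_nn M_nn P1 d_nn[of 0]
    by (intro exI[of _ "M * (P * d 0) + K / (1 - \<rho>)"] conjI exI[of _ \<rho>]) auto
  have pfix: "p \<in> Fix (T \<gamma>s)"
  proof -
    have "(\<lambda>n. (x n, \<gamma> n)) \<longlonglongrightarrow> (p, \<gamma>s)"
      using R_lin_tendsto[OF Rx] R_lin_tendsto[OF h4(3)] by (rule tendsto_Pair)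
    then have "(\<lambda>n. (\<lambda>(a, g). T g a) (x n, \<gamma> n)) \<longlonglongrightarrow> (\<lambda>(a, g). T g a) (p, \<gamma>s)"
      using h2 h4(2) g_in by (intro continuous_on_tendsto_compose[OF h2]) auto
    then have "y \<longlonglongrightarrow> T \<gamma>s p" by (simp add: y_def[abs_def])
    then have "T \<gamma>s p = p" using R_lin_tendsto[OF Ry] LIMSEQ_unique by blast
    then show ?thesis by (simp add: Fix_def)
  qed
  show ?thesis using part1 pfix Rx Ry unfolding y_def[abs_def] by blast
qed

end
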